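(* Let $c$ be a correct client following the client protocol described in the context, and let $o$ and $o'$ be two operations (each a \textsc{get} or a \textsc{put}) issued by $c$, with $o$ issued before $o'$. Then $\mathrm{ts}(o') \ge \mathrm{ts}(o)$.
   Context: Client model. A client $c$ has a physical clock whose reading $\mathsf{clock}_c$ is a positive real number that is strictly increasing in real time. The client keeps two variables, a dependency time $\mathsf{dt}_c$ and a common global stable time $\mathsf{cgst}_c$, both initially $0$; they are modified only as described below. A correct client issues its operations one at a time: an operation is issued only after the previous one has returned. Servers are grouped into partitions of $3f+1$ replicas each, and a quorum is a set of $2f+1$ replicas of one partition. \textsc{get}$(k)$: the client sets $ts \gets \max\{\mathsf{dt}_c, \mathsf{cgst}_c\}$ and sends a request carrying $ts$ to the replicas of the partition holding $k$. It then waits for replies from a quorum $Q$, each reply from replica $i\in Q$ carrying a value $v_i$ and a number $cgst_i$, sets $\mathsf{cgst}_c \gets \max\{\mathsf{cgst}_c, \min_{i\in Q} cgst_i\}$, and returns a value. \textsc{put}$(k,v)$: the client waits until $\mathsf{clock}_c > \mathsf{cgst}_c$, then sends a request carrying $(k, v, cl, c)$, where $cl$ is the current reading of $\mathsf{clock}_c$, to the replicas of the partition holding $k$. It then waits for replies from a quorum $Q$, each reply from $i\in Q$ carrying a number $cgst_i$, sets $\mathsf{cgst}_c \gets \max\{\mathsf{cgst}_c, \min_{i\in Q} cgst_i\}$, then sets $\mathsf{dt}_c$ to the current reading of $\mathsf{clock}_c$, and returns. Timestamps: for a \textsc{get} operation $o$, $\mathrm{ts}(o)$ is the value $ts=\max\{\mathsf{dt}_c,\mathsf{cgst}_c\}$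 computed when $o$ is issued; for a \textsc{put} operation $o$, $\mathrm{ts}(o)$ is the clock value $cl$ sent in its request. *)

theory Defs
  imports Complex_Main
begin

datatype opkind = GET | PUT

text \<open>A run of a correct client c issuing n operations 0,1,...,n-1 one at a time.
  clock t : reading of the physical clock of c at real time t (positive, strictly increasing);
  kind i : whether operation i is a GET or a PUT;
  s i : real time at which operation i is issued (its request is sent; for a PUT this is
        after the waiting phase, so cl = clock (s i));
  r i : real time at which operation i returns (for a PUT, dt is set to clock (r i));
  Q i : the quorum of replicas (indices of the 3f+1 replicas of the partition) whose replies
        are used, rep i q the cgst number carried by the reply of replica q to operation i;
  dt i, cg i : values of dt_c and cgst_c just before operation i is issued;
  ts i : timestamp of operation i.\<close>

definition client_run ::
  "(real \<Rightarrow> real) \<Rightarrow> nat \<Rightarrow> nat \<Rightarrow> (nat \<Rightarrow> opkind) \<Rightarrow> (nat \<Rightarrow> real) \<Rightarrow> (nat \<Rightarrow> real)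
   \<Rightarrow> (nat \<Rightarrow> nat set) \<Rightarrow> (nat \<Rightarrow> nat \<Rightarrow> real)
   \<Rightarrow> (nat \<Rightarrow> real) \<Rightarrow> (nat \<Rightarrow> real) \<Rightarrow> (nat \<Rightarrow> real) \<Rightarrow> bool" where
  "client_run clock f n kind s r Q rep dt cg ts \<longleftrightarrow>
     strict_mono clock \<and> (\<forall>t. 0 < clock t) \<and>
     dt 0 = 0 \<and> cg 0 = 0 \<and>
     (\<forall>i<n. s i \<le> r i) \<and>
     (\<forall>i. Suc i < n \<longrightarrow> r i \<le> s (Suc i)) \<and>
     (\<forall>i<n. Q i \<subseteq> {..<3*f+1} \<and> card (Q i) = 2*f+1) \<and>
     (\<forall>i<n. kind i = GET \<longrightarrow>
         ts i = max (dt i) (cg i) \<and>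
         cg (Suc i) = max (cg i) (Min (rep i ` Q i)) \<and>
         dt (Suc i) = dt i) \<and>
     (\<forall>i<n. kind i = PUT \<longrightarrow>
         cg i < clock (s i) \<and>
         ts i = clock (s i) \<and>
         cg (Suc i) = max (cg i) (Min (rep i ` Q i)) \<and>
         dt (Suc i) = clock (r i))"

end

theory Submission
  imports Defs
begin

theorem lemma7:
  assumes "client_run clock f n kind s r Q rep dt cg ts"
    and "i < j" and "j < n"
  shows "ts i \<le> ts j"
proof -
  note D = assms(1)[unfolded client_run_def]
  have sm: "strict_mono clock" using D by blast
  have mono: "a \<le> b \<Longrightarrow> clock a \<le> clock b" for a b
    using sm by (metis less_eq_real_def strict_mono_less)
  have cgm: "cg k \<le> cg (Suc k)" if "k < n" for k
    using D that by (cases "kind k") auto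
  have P: "k < n \<Longrightarrow> dt k \<le> clock (s k)" for k
  proof (induction k)
    case 0 then show ?case using D by (metis less_eq_real_def)
  next
    case (Suc k)
    have k: "k < n" using Suc by simp
    have "s k \<le> r k" "r k \<le> s (Suc k)" using D k Suc.prems by auto
    hence c1: "clock (s k) \<le> clock (s (Suc k))" "clock (r k) \<le> clock (s (Suc k))"
      using mono by auto
    show ?case using D k Suc c1 by (cases "kind k") auto
  qed
  define M where "M k = max (dt k) (cg k)" for k
  have le: "M k \<le> ts k" "ts k \<le> M (Suc k)" if "k < n" for k
  proof -
    have "s k \<le> r k" using D that by auto
    hence "clock (s k) \<le> clock (r k)" using mono by auto
    then show "M k \<le> ts k" "ts k \<le> M (Suc k)"
      using D that P[OF that] cgm[OF that] unfolding M_def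
      by (cases "kind k"; force)+
  qed
  have Mm: "M (Suc k) \<le> M (Suc k + d)" if "Suc k + d \<le> n" for k d
    using that
  proof (induction d)
    case 0 then show ?case by simp
  next
    case (Suc d)
    then have "M (Suc k + d) \<le> ts (Suc k + d)" "ts (Suc k + d) \<le> M (Suc (Suc k + d))"
      using le by auto
    then show ?case using Suc by simp
  qed
  obtain d where d: "j = Suc i + d" using assms(2) less_iff_Suc_add by auto
  have "ts i \<le> M (Suc i)" using le assms by auto
  also have "\<dots> \<le> M j" using Mm[of i d] d assms by simp
  also have "\<dots> \<le> ts j" using le assms by auto
  finally show ?thesis .
qed

end
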